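(* Let $G(\mathcal V,\mathcal E)$ be a finite simple directed graph and $f\ge 0$ an integer, and assume Condition 1 holds for $G$. Let $F\subset\mathcal V$ and $F_1\subset\mathcal V-F$ with $|F|\le f$ and $|F_1|\le f$, and let $S$ be the set of nodes of a source component of the reduced graph $G_{F,F_1}$. Then $S \Rightarrow_{\mathcal V - F} \mathcal V-F-S$.
   Context: For disjoint sets $X,Y\subseteq\mathcal V$ with $Y$ non-empty, $X\rightarrow Y$ means that $X$ contains at least $f+1$ distinct nodes $i$ such that $(i,j)\in\mathcal E$ for some $j\in Y$. Condition 1: for every partition $L,C,R,F$ of $\mathcal V$ (with $C$ or $F$ possibly empty) such that $L,R$ are non-empty and $|F|\le f$, either $L\cup C\rightarrow R$ or $R\cup C\rightarrow L$. Reduced graph: $G_{F,F_1}$ has vertex set $\mathcal V-F$ and edge set $\mathcal E-\{(i,j): i\in F \text{ or } j\in F\}-\{(i,j): i\in F_1\}$ (all edges incident to $F$ and all outgoing edges of nodes in $F_1$ are removed). A directed graph $H$ is partitioned into strongly connected components $H_1,\dots,H_h$ (nodes $i,j$ lie in the same $H_k$ iff there are $(i,j)$- and $(j,i)$-paths using only nodes of $H_k$); the condensation $H^d$ has a vertex $c_k$ per component and an edge $c_k\to c_l$ iff nodes of $H_k$ have directed paths in $H$ to nodes of $H_l$. A component $H_k$ is a source component if $c_k$ is not reachable from any other vertex of $H^d$. An $(X,y)$-path is a directed path (in $G$) from some node of $X$ to the node $y\notin X$; it excludes $F$ if it contains no node of $F$; $(X,y)$-paths are disjoint if they pairwise share only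 $y$. For pairwise disjoint $X,Y,F$ with $|F|\le f$, $X \Rightarrow_{\mathcal V - F} Y$ means: $Y=\emptyset$, or every $y\in Y$ has at least $f+1$ pairwise disjoint $(X,y)$-paths excluding $F$. *)

theory Defs
  imports Main
begin

definition simple_digraph :: "'a set \<Rightarrow> ('a \<times> 'a) set \<Rightarrow> bool" where
  "simple_digraph V E \<longleftrightarrow> finite V \<and> E \<subseteq> V \<times> V \<and> (\<forall>i. (i, i) \<notin> E)"

definition reaches :: "('a \<times> 'a) set \<Rightarrow> nat \<Rightarrow> 'a set \<Rightarrow> 'a set \<Rightarrow> bool" where
  "reaches E f X Y \<longleftrightarrow> card {i \<in> X. \<exists>j \<in> Y. (i, j) \<in> E} \<ge> f + 1"

definition condition1 :: "'a set \<Rightarrow> ('a \<times> 'a) set \<Rightarrow> nat \<Rightarrow> bool" where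
  "condition1 V E f \<longleftrightarrow>
     (\<forall>L C R F. L \<union> C \<union> R \<union> F = V \<and>
        L \<inter> C = {} \<and> L \<inter> R = {} \<and> L \<inter> F = {} \<and> C \<inter> R = {} \<and> C \<inter> F = {} \<and> R \<inter> F = {} \<and>
        L \<noteq> {} \<and> R \<noteq> {} \<and> card F \<le> f
        \<longrightarrow> reaches E f (L \<union> C) R \<or> reaches E f (R \<union> C) L)"

definition reduced_vertices :: "'a set \<Rightarrow> 'a set \<Rightarrow> 'a set" where
  "reduced_vertices V F = V - F"

definition reduced_edges :: "('a \<times> 'a) set \<Rightarrow> 'a set \<Rightarrow> 'a set \<Rightarrow> ('a \<times> 'a) set" where
  "reduced_edges E F F1 = E - {(i, j). i \<in> F \<or> j \<in> F} - {(i, j). i \<in> F1}"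

definition scc :: "'a set \<Rightarrow> ('a \<times> 'a) set \<Rightarrow> 'a set \<Rightarrow> bool" where
  "scc VH EH S \<longleftrightarrow> (\<exists>i \<in> VH. S = {j \<in> VH. (i, j) \<in> EH\<^sup>* \<and> (j, i) \<in> EH\<^sup>*})"

definition source_component :: "'a set \<Rightarrow> ('a \<times> 'a) set \<Rightarrow> 'a set \<Rightarrow> bool" where
  "source_component VH EH S \<longleftrightarrow> scc VH EH S \<and>
     (\<forall>u \<in> VH - S. \<forall>v \<in> S. (u, v) \<notin> EH\<^sup>*)"

definition is_path :: "'a set \<Rightarrow> ('a \<times> 'a) set \<Rightarrow> 'a list \<Rightarrow> bool" where
  "is_path V E p \<longleftrightarrow> p \<noteq> [] \<and> distinct p \<and> set p \<subseteq> V \<and>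
     (\<forall>k. Suc k < length p \<longrightarrow> (p ! k, p ! Suc k) \<in> E)"

definition Xy_path_excl :: "'a set \<Rightarrow> ('a \<times> 'a) set \<Rightarrow> 'a set \<Rightarrow> 'a \<Rightarrow> 'a set \<Rightarrow> 'a list \<Rightarrow> bool" where
  "Xy_path_excl V E X y F p \<longleftrightarrow> y \<notin> X \<and> is_path V E p \<and> hd p \<in> X \<and> last p = y \<and>
     set p \<inter> F = {}"

definition robust_reach :: "'a set \<Rightarrow> ('a \<times> 'a) set \<Rightarrow> nat \<Rightarrow> 'a set \<Rightarrow> 'a set \<Rightarrow> 'a set \<Rightarrow> bool" where
  "robust_reach V E f F X Y \<longleftrightarrow> Y = {} \<or>
     (\<forall>y \<in> Y. \<exists>P. finite P \<and> card P \<ge> f + 1 \<and> (\<forall>p \<in> P. Xy_path_excl V E X y F p) \<and>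
        (\<forall>p \<in> P. \<forall>q \<in> P. p \<noteq> q \<longrightarrow> set p \<inter> set q = {y}))"

end

theory Submission
  imports Defs
begin

lemma path_nonempty: "is_path V E p \<Longrightarrow> p \<noteq> []" by (simp add: is_path_def)

lemma path_mono: "is_path V E p \<Longrightarrow> E \<subseteq> E' \<Longrightarrow> is_path V E' p"
  unfolding is_path_def by blast

lemma path_take: "is_path V E p \<Longrightarrow> 0 < n \<Longrightarrow> is_path V E (take n p)"
  unfolding is_path_def
  by (auto dest: in_set_takeD)

lemma path_drop: "is_path V E p \<Longrightarrow> n < length p \<Longrightarrow> is_path V E (drop n p)"
  unfolding is_path_def
  by (auto dest: in_set_dropD)

lemma path_reach_aux: "is_path V E p \<Longrightarrow> set p \<subseteq> X \<Longrightarrow> i < length p \<Longrightarrow> (hd p, p!i) \<in> (E \<inter> X\<times>X)\<^sup>*"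
proof (induction i)
  case 0 thus ?case by (simp add: hd_conv_nth is_path_def)
next
  case (Suc i)
  hence "(hd p, p!i) \<in> (E \<inter> X\<times>X)\<^sup>*" by simp
  moreover have "(p!i, p!Suc i) \<in> E \<inter> X\<times>X" using Suc.prems unfolding is_path_def
    by (auto dest: nth_mem)
  ultimately show ?case by (rule rtrancl_into_rtrancl)
qed

lemma path_reach: "is_path V E p \<Longrightarrow> set p \<subseteq> X \<Longrightarrow> (hd p, last p) \<in> (E \<inter> X\<times>X)\<^sup>*"
  using path_reach_aux[of V E p X "length p - 1"]
  by (simp add: is_path_def last_conv_nth)

lemma path_append:
  assumes "is_path V E p" "is_path V E q" "set p \<inter> set q = {}" "(last p, hd q) \<in> E"
  shows "is_path V E (p @ q)"
proof -
  have ne: "p \<noteq> []" "q \<noteq> []" using assms by (auto simp: is_path_def)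
  { fix k assume k: "Suc k < length (p @ q)"
    have "((p@q)!k, (p@q)!Suc k) \<in> E"
    proof (cases "Suc k < length p")
      case True thus ?thesis using assms(1) by (simp add: nth_append is_path_def)
    next
      case False
      show ?thesis
      proof (cases "k < length p")
        case True
        hence "k = length p - 1" "Suc k = length p" using False by auto
        thus ?thesis using assms(4) ne by (simp add: nth_append last_conv_nth hd_conv_nth)
      next
        case False
        then obtain m where m: "k = length p + m" by (metis le_Suc_ex not_less)
        have "Suc m < length q" using k m by simp
        thus ?thesis using assms(2) m by (simp add: nth_append is_path_def)
      qed
    qed }
  thus ?thesis using assms ne unfolding is_path_def by auto
qed

lemma reach_path:
  assumes "(a,b) \<in> (E \<inter> X\<times>X)\<^sup>*" "a \<in> X" "X \<subseteq> V"
  shows "\<exists>p. is_path V E p \<and> hd p = a \<and> last p = b \<and> set p \<subseteq> X"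
  using assms(1)
proof (induction rule: rtrancl_induct)
  case base
  show ?case by (rule exI[of _ "[a]"]) (use assms in \<open>auto simp: is_path_def\<close>)
next
  case (step c b)
  then obtain p where p: "is_path V E p" "hd p = a" "last p = c" "set p \<subseteq> X" by blast
  show ?case
  proof (cases "b \<in> set p")
    case True
    then obtain i where i: "i < length p" "p!i = b" by (auto simp: in_set_conv_nth)
    have tk: "last (take (Suc i) p) = p!i" using i by (simp add: take_Suc_conv_app_nth)
    have hk: "hd (take (Suc i) p) = hd p" using i by simp
    show ?thesis
      apply (rule exI[of _ "take (Suc i) p"])
      using p i path_take[OF p(1), of "Suc i"] tk hk set_take_subset[of "Suc i" p]
      by auto
  next
    case False
    have "is_path V E [b]" using step assms by (auto simp: is_path_def)
    hence "is_path V E (p @ [b])" using path_append[OF p(1)] False step p by auto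
    thus ?thesis using p step path_nonempty[OF p(1)] by (intro exI[of _ "p@[b]"]) auto
  qed
qed

lemma path_prefix:
  assumes p: "is_path V E p" and X: "set p \<inter> X \<noteq> {}"
  shows "\<exists>q. is_path V {(u,w)\<in>E. u \<notin> X} q \<and> hd q = hd p \<and> last q \<in> X \<and> set q \<subseteq> set p
     \<and> (\<forall>j. Suc j < length q \<longrightarrow> q!j \<notin> X)"
proof -
  define i where "i = (LEAST i. i < length p \<and> p!i \<in> X)"
  obtain i0 where "i0 < length p \<and> p!i0 \<in> X" using X by (metis Int_emptyI in_set_conv_nth)
  hence i: "i < length p" "p!i \<in> X" unfolding i_def by (metis (mono_tags, lifting) LeastI)+
  have lt: "\<And>j. j < i \<Longrightarrow> p!j \<notin> X" unfolding i_def using i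
    by (metis (mono_tags, lifting) i_def not_less_Least order.strict_trans)
  define q where "q = take (Suc i) p"
  have lq: "length q = Suc i" using i by (simp add: q_def)
  have qn: "\<And>j. j < Suc i \<Longrightarrow> q!j = p!j" by (simp add: q_def)
  have "is_path V E q" unfolding q_def by (rule path_take[OF p]) simp
  hence "is_path V {(u,w)\<in>E. u \<notin> X} q"
    unfolding is_path_def using lq qn lt by auto
  moreover have "hd q = hd p" using i by (simp add: q_def)
  moreover have "last q = p!i" using i by (simp add: q_def take_Suc_conv_app_nth)
  moreover have "set q \<subseteq> set p" by (simp add: q_def set_take_subset)
  moreover have "\<forall>j. Suc j < length q \<longrightarrow> q!j \<notin> X" using lq qn lt by auto
  ultimately show ?thesis using i by (intro exI[of _ q]) simp
qed

lemma path_suffix: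
  assumes p: "is_path V E p" and X: "set p \<inter> X \<noteq> {}"
  shows "\<exists>q. is_path V {(u,w)\<in>E. w \<notin> X} q \<and> last q = last p \<and> hd q \<in> X \<and> set q \<subseteq> set p
     \<and> (\<forall>j. 0 < j \<and> j < length q \<longrightarrow> q!j \<notin> X)"
proof -
  define I where "I = {i. i < length p \<and> p!i \<in> X}"
  define i where "i = Max I"
  have fI: "finite I" unfolding I_def by simp
  have neI: "I \<noteq> {}" using X by (auto simp: in_set_conv_nth I_def)
  have "i \<in> I" unfolding i_def using fI neI by (rule Max_in)
  hence i: "i < length p" "p!i \<in> X" by (auto simp: I_def)
  have gt: "\<And>j. i < j \<Longrightarrow> j < length p \<Longrightarrow> p!j \<notin> X"
  proof
    fix j assume "i < j" "j < length p" "p!j \<in> X"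
    hence "j \<in> I" by (simp add: I_def)
    hence "j \<le> i" unfolding i_def using fI by simp
    thus False using \<open>i < j\<close> by simp
  qed
  define q where "q = drop i p"
  have lq: "length q = length p - i" by (simp add: q_def)
  have qn: "\<And>j. j < length q \<Longrightarrow> q!j = p!(i+j)" using i by (simp add: q_def)
  have "is_path V E q" unfolding q_def by (rule path_drop[OF p i(1)])
  hence "is_path V {(u,w)\<in>E. w \<notin> X} q"
    unfolding is_path_def using lq qn gt by auto
  moreover have "hd q = p!i" using i by (simp add: q_def hd_drop_conv_nth)
  moreover have "last q = last p" using i by (simp add: q_def)
  moreover have "set q \<subseteq> set p" by (simp add: q_def set_drop_subset)
  moreover have "\<forall>j. 0 < j \<and> j < length q \<longrightarrow> q!j \<notin> X" using lq qn gt by auto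
  ultimately show ?thesis using i by (intro exI[of _ q]) simp
qed

definition disj :: "'a list set \<Rightarrow> bool" where
  "disj P \<longleftrightarrow> (\<forall>p\<in>P. \<forall>q\<in>P. p \<noteq> q \<longrightarrow> set p \<inter> set q = {})"

lemma refine:
  assumes "finite P" "disj P" "\<And>p. p \<in> P \<Longrightarrow> \<exists>q. Q q \<and> q \<noteq> [] \<and> set q \<subseteq> set p"
  shows "\<exists>P'. finite P' \<and> card P' = card P \<and> (\<forall>q\<in>P'. Q q) \<and> disj P'"
proof -
  define h where "h p = (SOME q. Q q \<and> q \<noteq> [] \<and> set q \<subseteq> set p)" for p
  have h: "Q (h p) \<and> h p \<noteq> [] \<and> set (h p) \<subseteq> set p" if "p \<in> P" for p
    unfolding h_def by (rule someI_ex) (rule assms(3)[OF that])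
  have inj: "inj_on h P"
  proof (rule inj_onI, rule ccontr)
    fix p p' assume a: "p \<in> P" "p' \<in> P" "h p = h p'" "p \<noteq> p'"
    hence "set (h p) \<subseteq> set p \<inter> set p'" using h[OF a(1)] h[OF a(2)] by simp
    thus False using a assms(2) h[OF a(1)] unfolding disj_def by auto
  qed
  have "disj (h ` P)" unfolding disj_def
  proof (intro ballI impI)
    fix a b assume "a \<in> h ` P" "b \<in> h ` P" "a \<noteq> b"
    then obtain p p' where "p \<in> P" "p' \<in> P" "a = h p" "b = h p'" "p \<noteq> p'" by auto
    thus "set a \<inter> set b = {}" using h assms(2) unfolding disj_def by blast
  qed
  thus ?thesis using inj h assms(1) by (intro exI[of _ "h ` P"]) (auto simp: card_image)
qed

lemma biject_last:
  assumes "finite X" "finite P" "card P = card X" "disj P" "\<And>p. p \<in> P \<Longrightarrow> p \<noteq> [] \<and> last p \<in> X"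
  shows "last ` P = X"
proof -
  have "inj_on last P"
  proof (rule inj_onI, rule ccontr)
    fix p q assume a: "p \<in> P" "q \<in> P" "last p = last q" "p \<noteq> q"
    hence "last p \<in> set p \<inter> set q" using assms(5) by (metis IntI last_in_set)
    thus False using a assms(4) unfolding disj_def by auto
  qed
  hence "card (last ` P) = card X" using assms by (simp add: card_image)
  moreover have "last ` P \<subseteq> X" using assms(5) by auto
  ultimately show ?thesis using assms(1) by (metis card_subset_eq)
qed

lemma biject_hd:
  assumes "finite X" "finite P" "card P = card X" "disj P" "\<And>p. p \<in> P \<Longrightarrow> p \<noteq> [] \<and> hd p \<in> X"
  shows "hd ` P = X"
proof -
  have "inj_on hd P"
  proof (rule inj_onI, rule ccontr)
    fix p q assume a: "p \<in> P" "q \<in> P" "hd p = hd q" "p \<noteq> q"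
    hence "hd p \<in> set p \<inter> set q" using assms(5) by (metis IntI hd_in_set)
    thus False using a assms(4) unfolding disj_def by auto
  qed
  hence "card (hd ` P) = card X" using assms by (simp add: card_image)
  moreover have "hd ` P \<subseteq> X" using assms(5) by auto
  ultimately show ?thesis using assms(1) by (metis card_subset_eq)
qed


lemma in_set_take_nth: "x \<in> set (take n p) \<Longrightarrow> \<exists>m. m < n \<and> m < length p \<and> p!m = x"
  by (auto simp: in_set_conv_nth)

lemma in_set_drop_nth: "x \<in> set (drop n p) \<Longrightarrow> \<exists>m. n \<le> m \<and> m < length p \<and> p!m = x"
  by (auto simp: in_set_conv_nth) (metis add.commute le_add2 less_diff_conv)

definition abpath :: "'a set \<Rightarrow> ('a \<times> 'a) set \<Rightarrow> 'a set \<Rightarrow> 'a set \<Rightarrow> 'a list \<Rightarrow> bool" where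
  "abpath V E A B p \<longleftrightarrow> is_path V E p \<and> hd p \<in> A \<and> last p \<in> B"

definition sep :: "'a set \<Rightarrow> ('a \<times> 'a) set \<Rightarrow> 'a set \<Rightarrow> 'a set \<Rightarrow> 'a set \<Rightarrow> bool" where
  "sep V E A B W \<longleftrightarrow> (\<forall>p. abpath V E A B p \<longrightarrow> set p \<inter> W \<noteq> {})"

lemma path_single_E: "is_path V {} p \<Longrightarrow> \<exists>v. p = [v] \<and> v \<in> V"
proof -
  assume p: "is_path V {} p"
  then obtain a t where at: "p = a # t" by (cases p) (auto simp: is_path_def)
  have "t = []"
  proof (rule ccontr)
    assume "t \<noteq> []"
    hence "Suc 0 < length p" using at by simp
    thus False using p by (auto simp: is_path_def)
  qed
  thus ?thesis using at p by (auto simp: is_path_def)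
qed

lemma menger_base:
  assumes "finite V" "\<forall>W. finite W \<and> card W < k \<longrightarrow> \<not> sep V {} A B W"
  shows "\<exists>P. finite P \<and> card P = k \<and> (\<forall>p\<in>P. abpath V {} A B p) \<and> disj P"
proof -
  let ?W = "A \<inter> B \<inter> V"
  have fW: "finite ?W" using assms(1) by simp
  have "sep V {} A B ?W" unfolding sep_def abpath_def
    using path_single_E by fastforce
  hence "k \<le> card ?W" using assms(2) fW by (meson not_less)
  then obtain W' where W': "W' \<subseteq> ?W" "card W' = k" by (meson obtain_subset_with_card_n)
  have fW': "finite W'" using W' fW finite_subset by blast
  show ?thesis
    apply (rule exI[of _ "(\<lambda>v. [v]) ` W'"])
    using W' fW' by (auto simp: card_image inj_on_def abpath_def is_path_def disj_def)
qed


lemma abpath_mono: "abpath V E A B p \<Longrightarrow> E \<subseteq> E' \<Longrightarrow> abpath V E' A B p"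
  unfolding abpath_def using path_mono by blast

lemma menger_step:
  assumes V: "finite V" "E \<subseteq> V \<times> V" and exy: "(x,y) \<in> E"
    and IH: "\<And>E' A B k. card E' < card E \<Longrightarrow> E' \<subseteq> V \<times> V \<Longrightarrow>
       \<forall>W. finite W \<and> card W < k \<longrightarrow> \<not> sep V E' A B W \<Longrightarrow>
       \<exists>P. finite P \<and> card P = k \<and> (\<forall>p\<in>P. abpath V E' A B p) \<and> disj P"
    and hyp: "\<forall>W. finite W \<and> card W < k \<longrightarrow> \<not> sep V E A B W"
  shows "\<exists>P. finite P \<and> card P = k \<and> (\<forall>p\<in>P. abpath V E A B p) \<and> disj P"
proof -
  define E' where "E' = E - {(x,y)}"
  have fE: "finite E" using finite_subset[OF V(2)] V(1) by simp
  have cE': "card E' < card E" unfolding E'_def by (rule card_Diff1_less[OF fE exy])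
  have E'V: "E' \<subseteq> V \<times> V" using V unfolding E'_def by blast
  have E'E: "E' \<subseteq> E" unfolding E'_def by blast
  show ?thesis
  proof (cases "\<forall>W. finite W \<and> card W < k \<longrightarrow> \<not> sep V E' A B W")
    case True
    from IH[OF cE' E'V True] obtain P where
      "finite P" "card P = k" "\<forall>p\<in>P. abpath V E' A B p" "disj P" by blast
    thus ?thesis using abpath_mono[OF _ E'E] by (intro exI[of _ P]) auto
  next
    case False
    then obtain S where S: "finite S" "card S < k" "sep V E' A B S" by blast
    define Sx where "Sx = insert x S"
    define Sy where "Sy = insert y S"
    have c1: "sep V E A B Sx" unfolding sep_def
    proof (intro allI impI notI)
      fix p assume p: "abpath V E A B p" "set p \<inter> Sx = {}"
      have "is_path V E' p" using p unfolding abpath_def is_path_def E'_def Sx_def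
        by (auto dest: nth_mem)
      hence "abpath V E' A B p" using p(1) by (simp add: abpath_def)
      thus False using S(3) p(2) unfolding sep_def Sx_def by blast
    qed
    have c2: "sep V E A B Sy" unfolding sep_def
    proof (intro allI impI notI)
      fix p assume p: "abpath V E A B p" "set p \<inter> Sy = {}"
      have "is_path V E' p" using p unfolding abpath_def is_path_def E'_def Sy_def
        by (auto dest: nth_mem)
      hence "abpath V E' A B p" using p(1) by (simp add: abpath_def)
      thus False using S(3) p(2) unfolding sep_def Sy_def by blast
    qed
    have fSx: "finite Sx" "finite Sy" using S(1) by (auto simp: Sx_def Sy_def)
    have "k \<le> card Sx" using hyp c1 fSx by (meson not_less)
    hence xS: "x \<notin> S" and cSx: "card Sx = k" using S(1,2) unfolding Sx_def
      by (auto simp: card_insert_if split: if_splits)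
    have "k \<le> card Sy" using hyp c2 fSx by (meson not_less)
    hence yS: "y \<notin> S" and cSy: "card Sy = k" using S(1,2) unfolding Sy_def
      by (auto simp: card_insert_if split: if_splits)
    have c3: "\<forall>W. finite W \<and> card W < k \<longrightarrow> \<not> sep V E' A Sx W"
    proof (intro allI impI notI)
      fix W assume W: "finite W \<and> card W < k" "sep V E' A Sx W"
      obtain p where p: "abpath V E A B p" "set p \<inter> W = {}"
        using hyp W(1) unfolding sep_def by blast
      have ne: "set p \<inter> Sx \<noteq> {}" using c1 p(1) unfolding sep_def by blast
      have pp: "is_path V E p" using p(1) unfolding abpath_def by simp
      from path_prefix[OF pp ne] obtain q where
        q: "is_path V {(u,w)\<in>E. u \<notin> Sx} q" "hd q = hd p" "last q \<in> Sx" "set q \<subseteq> set p" by blast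
      have "{(u,w)\<in>E. u \<notin> Sx} \<subseteq> E'" unfolding E'_def Sx_def by auto
      hence "abpath V E' A Sx q" using q p(1) path_mono[OF q(1)] unfolding abpath_def by simp
      thus False using W(2) q(4) p(2) unfolding sep_def by blast
    qed
    have c4: "\<forall>W. finite W \<and> card W < k \<longrightarrow> \<not> sep V E' Sy B W"
    proof (intro allI impI notI)
      fix W assume W: "finite W \<and> card W < k" "sep V E' Sy B W"
      obtain p where p: "abpath V E A B p" "set p \<inter> W = {}"
        using hyp W(1) unfolding sep_def by blast
      have ne: "set p \<inter> Sy \<noteq> {}" using c2 p(1) unfolding sep_def by blast
      have pp: "is_path V E p" using p(1) unfolding abpath_def by simp
      from path_suffix[OF pp ne] obtain q where
        q: "is_path V {(u,w)\<in>E. w \<notin> Sy} q" "last q = last p" "hd q \<in> Sy" "set q \<subseteq> set p" by blast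
      have "{(u,w)\<in>E. w \<notin> Sy} \<subseteq> E'" unfolding E'_def Sy_def by auto
      hence "abpath V E' Sy B q" using q p(1) path_mono[OF q(1)] unfolding abpath_def by simp
      thus False using W(2) q(4) p(2) unfolding sep_def by blast
    qed
    obtain P1 where P1: "finite P1" "card P1 = k" "\<forall>p\<in>P1. abpath V E' A Sx p" "disj P1"
      using IH[OF cE' E'V c3] by blast
    obtain P2 where P2: "finite P2" "card P2 = k" "\<forall>p\<in>P2. abpath V E' Sy B p" "disj P2"
      using IH[OF cE' E'V c4] by blast
    obtain P1' where P1': "finite P1'" "card P1' = k"
      "\<forall>q\<in>P1'. abpath V E' A Sx q \<and> (\<forall>j. Suc j < length q \<longrightarrow> q!j \<notin> Sx)" "disj P1'"
    proof -
      have "\<exists>q. (abpath V E' A Sx q \<and> (\<forall>j. Suc j < length q \<longrightarrow> q!j \<notin> Sx)) \<and> q \<noteq> [] \<and> set q \<subseteq> set p"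
        if "p \<in> P1" for p
      proof -
        have p: "abpath V E' A Sx p" using P1(3) that by blast
        hence ne: "set p \<inter> Sx \<noteq> {}" unfolding abpath_def
          by (metis disjoint_iff last_in_set path_nonempty)
        have pp: "is_path V E' p" using p unfolding abpath_def by simp
        from path_prefix[OF pp ne] obtain q where
          q: "is_path V {(u,w)\<in>E'. u \<notin> Sx} q" "hd q = hd p" "last q \<in> Sx" "set q \<subseteq> set p"
             "\<forall>j. Suc j < length q \<longrightarrow> q!j \<notin> Sx" by blast
        have "is_path V E' q" using path_mono[OF q(1)] by blast
        thus ?thesis using q p path_nonempty[OF q(1)] unfolding abpath_def by (intro exI[of _ q]) simp
      qed
      from refine[OF P1(1) P1(4) this] P1(2) that show ?thesis by auto
    qed
    obtain P2' where P2': "finite P2'" "card P2' = k"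
      "\<forall>q\<in>P2'. abpath V E' Sy B q \<and> (\<forall>j. 0 < j \<and> j < length q \<longrightarrow> q!j \<notin> Sy)" "disj P2'"
    proof -
      have "\<exists>q. (abpath V E' Sy B q \<and> (\<forall>j. 0 < j \<and> j < length q \<longrightarrow> q!j \<notin> Sy)) \<and> q \<noteq> [] \<and> set q \<subseteq> set p"
        if "p \<in> P2" for p
      proof -
        have p: "abpath V E' Sy B p" using P2(3) that by blast
        hence ne: "set p \<inter> Sy \<noteq> {}" unfolding abpath_def
          by (metis disjoint_iff hd_in_set path_nonempty)
        have pp: "is_path V E' p" using p unfolding abpath_def by simp
        from path_suffix[OF pp ne] obtain q where
          q: "is_path V {(u,w)\<in>E'. w \<notin> Sy} q" "last q = last p" "hd q \<in> Sy" "set q \<subseteq> set p"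
             "\<forall>j. 0 < j \<and> j < length q \<longrightarrow> q!j \<notin> Sy" by blast
        have "is_path V E' q" using path_mono[OF q(1)] by blast
        thus ?thesis using q p path_nonempty[OF q(1)] unfolding abpath_def by (intro exI[of _ q]) simp
      qed
      from refine[OF P2(1) P2(4) this] P2(2) that show ?thesis by auto
    qed
    have imP1: "last ` P1' = Sx"
      by (rule biject_last[OF fSx(1) P1'(1)]) (use P1' cSx in \<open>auto simp: abpath_def dest: path_nonempty\<close>)
    have imP2: "hd ` P2' = Sy"
      by (rule biject_hd[OF fSx(2) P2'(1)]) (use P2' cSy in \<open>auto simp: abpath_def dest: path_nonempty\<close>)
    define pa where "pa a = (SOME p. p \<in> P1' \<and> last p = a)" for a
    define qb where "qb b = (SOME q. q \<in> P2' \<and> hd q = b)" for b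
    have pa: "pa a \<in> P1' \<and> last (pa a) = a" if "a \<in> Sx" for a
      unfolding pa_def by (rule someI_ex) (use imP1 that in blast)
    have qb: "qb b \<in> P2' \<and> hd (qb b) = b" if "b \<in> Sy" for b
      unfolding qb_def by (rule someI_ex) (use imP2 that in blast)
    have key: "v \<in> S \<and> v = a \<and> v = b"
      if ab: "a \<in> Sx" "b \<in> Sy" "v \<in> set (pa a)" "v \<in> set (qb b)" for a b v
    proof -
      define p where "p = pa a"
      define q where "q = qb b"
      have pP: "abpath V E' A Sx p" "\<forall>j. Suc j < length p \<longrightarrow> p!j \<notin> Sx" "last p = a"
        using pa[OF ab(1)] P1'(3) unfolding p_def by auto
      have qP: "abpath V E' Sy B q" "\<forall>j. 0 < j \<and> j < length q \<longrightarrow> q!j \<notin> Sy" "hd q = b"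
        using qb[OF ab(2)] P2'(3) unfolding q_def by auto
      have pp: "is_path V E' p" and qp: "is_path V E' q" using pP qP by (auto simp: abpath_def)
      obtain i where i: "i < length p" "p!i = v" using ab(3) unfolding p_def by (auto simp: in_set_conv_nth)
      obtain j where j: "j < length q" "q!j = v" using ab(4) unfolding q_def by (auto simp: in_set_conv_nth)
      show ?thesis
      proof (cases "v \<in> S")
        case True
        have "\<not> Suc i < length p" using pP(2) True i unfolding Sx_def by auto
        hence "i = length p - 1" using i by simp
        hence va: "v = a" using i pP(3) pp by (simp add: last_conv_nth path_nonempty)
        have "\<not> 0 < j" using qP(2) True j unfolding Sy_def by auto
        hence "v = b" using j qP(3) qp by (simp add: hd_conv_nth path_nonempty)
        thus ?thesis using True va by simp
      next
        case False
        define p1 where "p1 = take (Suc i) p"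
        define q1 where "q1 = drop j q"
        have p1p: "is_path V E' p1" unfolding p1_def by (rule path_take[OF pp]) simp
        have q1p: "is_path V E' q1" unfolding q1_def by (rule path_drop[OF qp j(1)])
        have p1s: "set p1 \<subseteq> V - S"
        proof
          fix z assume "z \<in> set p1"
          then obtain m where m: "m < Suc i" "m < length p" "p!m = z"
            using in_set_take_nth unfolding p1_def by metis
          have "z \<in> V" using pp m unfolding is_path_def by (auto dest: nth_mem)
          moreover have "z \<notin> S"
          proof (cases "m < i")
            case True thus ?thesis using pP(2) m i unfolding Sx_def by auto
          next
            case False thus ?thesis using m i \<open>v \<notin> S\<close> by (metis less_SucE)
          qed
          ultimately show "z \<in> V - S" by simp
        qed
        have q1s: "set q1 \<subseteq> V - S"
        proof
          fix z assume "z \<in> set q1"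
          then obtain m where m: "j \<le> m" "m < length q" "q!m = z"
            using in_set_drop_nth unfolding q1_def by metis
          have "z \<in> V" using qp m unfolding is_path_def by (auto dest: nth_mem)
          moreover have "z \<notin> S"
          proof (cases "j < m")
            case True thus ?thesis using qP(2) m unfolding Sy_def by auto
          next
            case False thus ?thesis using m j \<open>v \<notin> S\<close> by (metis le_neq_implies_less)
          qed
          ultimately show "z \<in> V - S" by simp
        qed
        have r1: "(hd p, v) \<in> (E' \<inter> (V-S)\<times>(V-S))\<^sup>*"
        proof -
          have "hd p1 = hd p" unfolding p1_def using i by simp
          moreover have "last p1 = v" unfolding p1_def using i by (simp add: take_Suc_conv_app_nth)
          ultimately show ?thesis using path_reach[OF p1p p1s] by simp
        qed
        have r2: "(v, last q) \<in> (E' \<inter> (V-S)\<times>(V-S))\<^sup>*"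
          using path_reach[OF q1p q1s] j unfolding q1_def by (simp add: hd_drop_conv_nth)
        have hp1: "hd p1 = hd p" unfolding p1_def using i by simp
        have "hd p1 \<in> set p1" using path_nonempty[OF p1p] by simp
        hence hpS: "hd p \<in> V - S" using p1s hp1 by auto
        from reach_path[OF rtrancl_trans[OF r1 r2] hpS] obtain r where
          r: "is_path V E' r" "hd r = hd p" "last r = last q" "set r \<subseteq> V - S" by blast
        have "abpath V E' A B r" using r pP(1) qP(1) by (simp add: abpath_def)
        moreover have "set r \<inter> S = {}" using r(4) by blast
        ultimately have False using S(3) unfolding sep_def by blast
        thus ?thesis ..
      qed
    qed
    define \<beta> where "\<beta> a = (if a = x then y else a)" for a
    define g where "g a = pa a @ (if a = x then qb y else tl (qb a))" for a
    have \<beta>S: "\<beta> a \<in> Sy" if "a \<in> Sx" for a using that unfolding \<beta>_def Sx_def Sy_def by auto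
    have gs: "set (g a) \<subseteq> set (pa a) \<union> set (qb (\<beta> a))" for a
    proof -
      have "set (tl (qb a)) \<subseteq> set (qb a)" by (cases "qb a") auto
      thus ?thesis unfolding g_def \<beta>_def by auto
    qed
    have pap: "is_path V E' (pa a)" "hd (pa a) \<in> A" if "a \<in> Sx" for a
      using bspec[OF P1'(3) conjunct1[OF pa[OF that]]] unfolding abpath_def by blast+
    have qbp: "is_path V E' (qb b)" "last (qb b) \<in> B" if "b \<in> Sy" for b
      using bspec[OF P2'(3) conjunct1[OF qb[OF that]]] unfolding abpath_def by blast+
    have gpath: "abpath V E A B (g a)" if a: "a \<in> Sx" for a
    proof (cases "a = x")
      case True
      have xS': "x \<in> Sx" "y \<in> Sy" by (auto simp: Sx_def Sy_def)
      have d: "set (pa x) \<inter> set (qb y) = {}" using key[OF xS'] xS by blast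
      have "is_path V E (pa x @ qb y)"
        using path_append[OF path_mono[OF pap(1)[OF xS'(1)] E'E] path_mono[OF qbp(1)[OF xS'(2)] E'E] d]
          pa[OF xS'(1)] qb[OF xS'(2)] exy by simp
      thus ?thesis using True pap(2)[OF a] qbp(2)[OF xS'(2)] path_nonempty[OF qbp(1)[OF xS'(2)]]
          path_nonempty[OF pap(1)[OF a]]
        unfolding g_def abpath_def by simp
    next
      case False
      hence aS: "a \<in> S" "a \<in> Sy" using a unfolding Sx_def Sy_def by auto
      define p where "p = pa a"
      define q where "q = qb a"
      have pp: "is_path V E p" using path_mono[OF pap(1)[OF a] E'E] p_def by simp
      have qp': "is_path V E' q" using qbp(1)[OF aS(2)] q_def by simp
      have qp: "is_path V E q" using path_mono[OF qp' E'E] .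
      have lp: "last p = a" using pa[OF a] p_def by simp
      have hq: "hd q = a" using qb[OF aS(2)] q_def by simp
      have gq: "g a = p @ tl q" using False unfolding g_def p_def q_def by simp
      have lq: "last q \<in> B" using qbp(2)[OF aS(2)] q_def by simp
      show ?thesis
      proof (cases "tl q = []")
        case True
        have "q = [a]" using True hq path_nonempty[OF qp] by (metis list.collapse)
        thus ?thesis using gq True pp lp lq pap(2)[OF a] p_def unfolding abpath_def by simp
      next
        case tne: False
        have ql: "1 < length q" using tne by (cases q) auto
        have tp: "is_path V E (tl q)" using path_drop[OF qp, of 1] ql by (simp add: drop_Suc)
        have dq: "distinct q" using qp by (simp add: is_path_def)
        have d: "set p \<inter> set (tl q) = {}"
        proof (rule ccontr)
          assume "set p \<inter> set (tl q) \<noteq> {}"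
          then obtain v where v: "v \<in> set p" "v \<in> set (tl q)" by blast
          hence "v \<in> set q" by (cases q) auto
          hence "v = a" using key[OF a aS(2)] v p_def q_def by blast
          thus False using v(2) hq dq path_nonempty[OF qp] by (metis distinct.simps(2) list.collapse)
        qed
        have e: "(last p, hd (tl q)) \<in> E"
        proof -
          have "(q!0, q!Suc 0) \<in> E" using qp ql unfolding is_path_def by simp
          moreover have "q!0 = a" using hq path_nonempty[OF qp] by (simp add: hd_conv_nth)
          moreover have "hd (tl q) = q!Suc 0" using tne by (cases q) (auto simp: hd_conv_nth)
          ultimately show ?thesis using lp by simp
        qed
        have "is_path V E (p @ tl q)" by (rule path_append[OF pp tp d e])
        moreover have "last (tl q) = last q" using tne by (simp add: last_tl)
        ultimately show ?thesis using gq lq pap(2)[OF a] p_def tne path_nonempty[OF pp]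
          unfolding abpath_def by simp
      qed
    qed
    have gdisj: "set (g a) \<inter> set (g a') = {}" if a: "a \<in> Sx" "a' \<in> Sx" "a \<noteq> a'" for a a'
    proof (rule ccontr)
      assume "set (g a) \<inter> set (g a') \<noteq> {}"
      then obtain v where v: "v \<in> set (g a)" "v \<in> set (g a')" by blast
      have "pa a \<noteq> pa a'" using pa[OF a(1)] pa[OF a(2)] a(3) by auto
      hence d1: "set (pa a) \<inter> set (pa a') = {}"
        using conjunct1[OF pa[OF a(1)]] conjunct1[OF pa[OF a(2)]] P1'(4) unfolding disj_def by blast
      have "\<beta> a \<noteq> \<beta> a'" using a xS yS unfolding \<beta>_def Sx_def by auto
      hence "qb (\<beta> a) \<noteq> qb (\<beta> a')" using qb[OF \<beta>S[OF a(1)]] qb[OF \<beta>S[OF a(2)]] by auto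
      hence d2: "set (qb (\<beta> a)) \<inter> set (qb (\<beta> a')) = {}"
        using conjunct1[OF qb[OF \<beta>S[OF a(1)]]] conjunct1[OF qb[OF \<beta>S[OF a(2)]]] P2'(4) unfolding disj_def by blast
      have d3: False if "v \<in> set (pa c)" "v \<in> set (qb (\<beta> c'))" "c \<in> Sx" "c' \<in> Sx" "c \<noteq> c'" for c c'
      proof -
        have "v \<in> S \<and> v = c \<and> v = \<beta> c'" using key[OF that(3) \<beta>S[OF that(4)] that(1,2)] .
        thus False using that(5) yS unfolding \<beta>_def by (auto split: if_splits)
      qed
      have "v \<in> set (pa a) \<union> set (qb (\<beta> a))" "v \<in> set (pa a') \<union> set (qb (\<beta> a'))"
        using v gs[of a] gs[of a'] by auto
      thus False using d1 d2 d3[of a a'] d3[of a' a] a by auto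
    qed
    have ginj: "inj_on g Sx"
    proof (rule inj_onI, rule ccontr)
      fix a a' assume "a \<in> Sx" "a' \<in> Sx" "g a = g a'" "a \<noteq> a'"
      hence "set (g a) = {}" using gdisj by (metis Int_absorb)
      moreover have "g a \<noteq> []" using gpath[OF \<open>a \<in> Sx\<close>] path_nonempty unfolding abpath_def by blast
      ultimately show False by simp
    qed
    show ?thesis
    proof (intro exI[of _ "g ` Sx"] conjI)
      show "finite (g ` Sx)" using fSx by simp
      show "card (g ` Sx) = k" using ginj cSx by (simp add: card_image)
      show "\<forall>p\<in>g ` Sx. abpath V E A B p" using gpath by blast
      show "disj (g ` Sx)" unfolding disj_def using gdisj by blast
    qed
  qed
qed


theorem menger:
  assumes "finite V" "E \<subseteq> V \<times> V" "\<forall>W. finite W \<and> card W < k \<longrightarrow> \<not> sep V E A B W"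
  shows "\<exists>P. finite P \<and> card P = k \<and> (\<forall>p\<in>P. abpath V E A B p) \<and> disj P"
  using assms(2,3)
proof (induction "card E" arbitrary: E A B k rule: less_induct)
  case less
  show ?case
  proof (cases "E = {}")
    case True
    thus ?thesis using menger_base[OF assms(1)] less.prems(2) by simp
  next
    case False
    then obtain x y where exy: "(x,y) \<in> E" by auto
    show ?thesis
      by (rule menger_step[OF assms(1) less.prems(1) exy _ less.prems(2)]) (rule less.hyps; assumption)
  qed
qed

lemma path_mono2: "is_path V E p \<Longrightarrow> V \<subseteq> V' \<Longrightarrow> E \<subseteq> E' \<Longrightarrow> is_path V' E' p"
  unfolding is_path_def by blast

lemma path_butlast:
  assumes p: "is_path V E p" and l: "1 < length p" and s: "set (butlast p) \<subseteq> V'"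
  shows "is_path V' (E \<inter> V'\<times>V') (butlast p) \<and> hd (butlast p) = hd p \<and> (last (butlast p), last p) \<in> E
     \<and> last p \<notin> set (butlast p)"
proof -
  define q where "q = butlast p"
  have pq: "p = q @ [last p]" using p unfolding q_def by (simp add: is_path_def)
  have lq: "length q = length p - 1" unfolding q_def by simp
  have qn: "q \<noteq> []" using l lq by auto
  have qi: "\<And>j. j < length q \<Longrightarrow> q!j = p!j" unfolding q_def by (simp add: nth_butlast)
  have d: "distinct p" using p by (simp add: is_path_def)
  have "distinct q" using d unfolding q_def by (simp add: distinct_butlast)
  moreover have "\<forall>k. Suc k < length q \<longrightarrow> (q!k, q!Suc k) \<in> E \<inter> V'\<times>V'"
  proof (intro allI impI)
    fix k assume k: "Suc k < length q"
    have "(p!k, p!Suc k) \<in> E" using p k lq unfolding is_path_def by simp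
    moreover have "q!k \<in> V'" "q!Suc k \<in> V'" using s k unfolding q_def[symmetric] by auto
    ultimately show "(q!k, q!Suc k) \<in> E \<inter> V'\<times>V'" using qi k by simp
  qed
  ultimately have "is_path V' (E \<inter> V'\<times>V') q" using qn s unfolding is_path_def q_def by simp
  moreover have "hd q = hd p" using qn pq by (metis hd_append)
  moreover have "(last q, last p) \<in> E"
  proof -
    have "(p!(length p - 2), p!Suc (length p - 2)) \<in> E" using p l unfolding is_path_def by simp
    moreover have "last q = p!(length p - 2)" using qn lq qi[of "length p - 2"] l
      by (simp add: last_conv_nth numeral_2_eq_2)
    moreover have "last p = p!Suc (length p - 2)" using l p path_nonempty[OF p]
      by (simp add: last_conv_nth numeral_2_eq_2 Suc_diff_Suc)
    ultimately show ?thesis by simp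
  qed
  moreover have "last p \<notin> set q" using d pq by (metis distinct_append disjoint_iff list.set_intros(1))
  ultimately show ?thesis unfolding q_def by simp
qed


theorem corollary2:
  fixes V :: "'a set" and E :: "('a \<times> 'a) set" and f :: nat and F F1 S :: "'a set"
  assumes "simple_digraph V E"
    and "condition1 V E f"
    and "F \<subseteq> V" and "F1 \<subseteq> V - F"
    and "card F \<le> f" and "card F1 \<le> f"
    and "source_component (reduced_vertices V F) (reduced_edges E F F1) S"
  shows "robust_reach V E f F S (V - F - S)"
proof -
  have fV: "finite V" and EV: "E \<subseteq> V \<times> V" using assms(1) by (auto simp: simple_digraph_def)
  define VH where "VH = V - F"
  define EH where "EH = reduced_edges E F F1"
  have sc: "scc VH EH S" and src: "\<forall>u \<in> VH - S. \<forall>v \<in> S. (u, v) \<notin> EH\<^sup>*"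
    using assms(7) unfolding source_component_def VH_def EH_def reduced_vertices_def by auto
  obtain i0 where i0: "i0 \<in> VH" "S = {j \<in> VH. (i0, j) \<in> EH\<^sup>* \<and> (j, i0) \<in> EH\<^sup>*}"
    using sc unfolding scc_def by blast
  have SVH: "S \<subseteq> V - F" using i0 unfolding VH_def by auto
  have Sne: "S \<noteq> {}" using i0 by auto
  have fF1: "finite F1" using assms(4) fV finite_subset by blast
  show ?thesis unfolding robust_reach_def
  proof (rule disjI2, rule ballI)
    fix y assume y: "y \<in> V - F - S"
    define V2 where "V2 = V - F - {y}"
    define E2 where "E2 = E \<inter> V2 \<times> V2"
    define B where "B = {u \<in> V2. (u,y) \<in> E}"
    have hyp: "\<forall>W. finite W \<and> card W < f + 1 \<longrightarrow> \<not> sep V2 E2 S B W"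
    proof (intro allI impI notI)
      fix W assume W: "finite W \<and> card W < f + 1" "sep V2 E2 S B W"
      define X where "X = (V - F - W) \<union> {y}"
      define R where "R = {v \<in> X - S. (v,y) \<in> (E \<inter> X\<times>X)\<^sup>*}"
      define C where "C = V - F - S - R"
      have yR: "y \<in> R" using y unfolding R_def X_def by auto
      have RX: "R \<subseteq> X" "R \<inter> S = {}" unfolding R_def by auto
      have XV: "X \<subseteq> V" using y unfolding X_def by auto
      have RV: "R \<subseteq> V - F - S" using RX XV y unfolding X_def by auto
      have imp: "S \<union> C \<union> R \<union> F = V \<and>
        S \<inter> C = {} \<and> S \<inter> R = {} \<and> S \<inter> F = {} \<and> C \<inter> R = {} \<and> C \<inter> F = {} \<and> R \<inter> F = {} \<and>
        S \<noteq> {} \<and> R \<noteq> {} \<and> card F \<le> f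
        \<longrightarrow> reaches E f (S \<union> C) R \<or> reaches E f (R \<union> C) S"
        using assms(2) unfolding condition1_def by blast
      have "S \<union> C \<union> R \<union> F = V \<and>
        S \<inter> C = {} \<and> S \<inter> R = {} \<and> S \<inter> F = {} \<and> C \<inter> R = {} \<and> C \<inter> F = {} \<and> R \<inter> F = {} \<and>
        S \<noteq> {} \<and> R \<noteq> {} \<and> card F \<le> f"
      proof (intro conjI)
        show "S \<union> C \<union> R \<union> F = V" using SVH RV assms(3) unfolding C_def by auto
      qed (use SVH RV assms(3,5) Sne yR in \<open>auto simp: C_def\<close>)
      with imp have "reaches E f (S \<union> C) R \<or> reaches E f (R \<union> C) S" by blast
      thus False
      proof
        assume r: "reaches E f (S \<union> C) R"
        have sub: "{i \<in> S \<union> C. \<exists>j \<in> R. (i, j) \<in> E} \<subseteq> W"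
        proof
          fix i assume "i \<in> {i \<in> S \<union> C. \<exists>j \<in> R. (i, j) \<in> E}"
          then obtain j where i: "i \<in> S \<union> C" "j \<in> R" "(i,j) \<in> E" by blast
          show "i \<in> W"
          proof (rule ccontr)
            assume iW: "i \<notin> W"
            have iy: "i \<noteq> y" using i(1) yR RX unfolding C_def by auto
            have iX: "i \<in> X" using i(1) iW SVH unfolding X_def C_def by auto
            have "(j,y) \<in> (E \<inter> X\<times>X)\<^sup>*" using i(2) unfolding R_def by blast
            moreover have "(i,j) \<in> E \<inter> X\<times>X" using i RX iX by auto
            ultimately have iyr: "(i,y) \<in> (E \<inter> X\<times>X)\<^sup>*" by (rule converse_rtrancl_into_rtrancl[rotated])
            show False
            proof (cases "i \<in> S")
              case False
              hence "i \<in> R" using iX iyr unfolding R_def by blast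
              thus False using i(1) False unfolding C_def by blast
            next
              case True
              from reach_path[OF iyr iX XV] obtain p where
                p: "is_path V E p" "hd p = i" "last p = y" "set p \<subseteq> X" by blast
              have l: "1 < length p"
              proof (rule ccontr)
                assume "\<not> 1 < length p"
                hence "length p = 1" using path_nonempty[OF p(1)] by (cases p) auto
                hence "hd p = last p" by (cases p) auto
                thus False using p iy by simp
              qed
              have dp: "distinct p" using p(1) by (simp add: is_path_def)
              have pb: "p = butlast p @ [y]" using p(3) append_butlast_last_id[OF path_nonempty[OF p(1)]] by simp
              have sb: "set (butlast p) \<subseteq> V2 - W"
              proof
                fix z assume z: "z \<in> set (butlast p)"
                have "distinct (butlast p @ [last p])"
                  using dp by (simp only: append_butlast_last_id[OF path_nonempty[OF p(1)]])
                hence "z \<noteq> y" using z p(3) by auto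
                moreover have "z \<in> set p" using in_set_butlastD[OF z] .
                hence "z \<in> X" using p(4) by (rule rev_subsetD)
                ultimately show "z \<in> V2 - W" unfolding X_def V2_def by simp
              qed
              hence sb2: "set (butlast p) \<subseteq> V2" by blast
              have q: "is_path V2 E2 (butlast p)" "hd (butlast p) = i" "(last (butlast p), y) \<in> E"
                using path_butlast[OF p(1) l sb2] p(2,3) unfolding E2_def by simp_all
              have "butlast p \<noteq> []" using path_nonempty[OF q(1)] .
              hence "last (butlast p) \<in> V2" using sb2 by auto
              hence "abpath V2 E2 S B (butlast p)" using q True unfolding abpath_def B_def by simp
              moreover have "set (butlast p) \<inter> W = {}" using sb by blast
              ultimately show False using W(2) unfolding sep_def by auto
            qed
          qed
        qed
        have "card {i \<in> S \<union> C. \<exists>j \<in> R. (i, j) \<in> E} \<le> card W" using card_mono[OF _ sub] W(1) by blast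
        thus False using r W(1) unfolding reaches_def by simp
      next
        assume r: "reaches E f (R \<union> C) S"
        have sub: "{i \<in> R \<union> C. \<exists>j \<in> S. (i, j) \<in> E} \<subseteq> F1"
        proof
          fix i assume "i \<in> {i \<in> R \<union> C. \<exists>j \<in> S. (i, j) \<in> E}"
          then obtain j where i: "i \<in> R \<union> C" "j \<in> S" "(i,j) \<in> E" by blast
          show "i \<in> F1"
          proof (rule ccontr)
            assume "i \<notin> F1"
            have iV: "i \<in> VH - S" using i(1) RV unfolding C_def VH_def by auto
            have "j \<in> VH" using i(2) SVH unfolding VH_def by auto
            hence "(i,j) \<in> EH" using iV i(3) \<open>i \<notin> F1\<close>
              unfolding EH_def reduced_edges_def VH_def by auto
            thus False using src iV i(2) by blast
          qed
        qed
        have "card {i \<in> R \<union> C. \<exists>j \<in> S. (i, j) \<in> E} \<le> card F1" using card_mono[OF fF1 sub] .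
        thus False using r assms(6) unfolding reaches_def by simp
      qed
    qed
    have fV2: "finite V2" using fV unfolding V2_def by simp
    have E2V: "E2 \<subseteq> V2 \<times> V2" unfolding E2_def by blast
    obtain P where P: "finite P" "card P = f + 1" "\<forall>p\<in>P. abpath V2 E2 S B p" "disj P"
      using menger[OF fV2 E2V hyp] by blast
    define P' where "P' = (\<lambda>p. p @ [y]) ` P"
    have inj: "inj_on (\<lambda>p. p @ [y]) P" by (rule inj_onI) simp
    have "card P' = f + 1" unfolding P'_def using card_image[OF inj] P(2) by simp
    moreover have "finite P'" unfolding P'_def using P(1) by simp
    moreover have "\<forall>p'\<in>P'. Xy_path_excl V E S y F p'"
    proof
      fix p' assume "p' \<in> P'"
      then obtain p where pP: "p \<in> P" and pe: "p' = p @ [y]" unfolding P'_def by blast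
      have ab: "abpath V2 E2 S B p" using P(3) pP by blast
      have pp: "is_path V E p" using ab path_mono2 unfolding abpath_def V2_def E2_def by blast
      have sp: "set p \<subseteq> V2" using ab unfolding abpath_def is_path_def by blast
      have yy: "is_path V E [y]" using y unfolding is_path_def by auto
      have "set p \<inter> set [y] = {}" using sp unfolding V2_def by auto
      moreover have "(last p, hd [y]) \<in> E" using ab unfolding abpath_def B_def by simp
      ultimately have "is_path V E (p @ [y])" using path_append[OF pp yy] by blast
      moreover have "hd (p @ [y]) \<in> S" using ab path_nonempty[OF pp] unfolding abpath_def by simp
      moreover have "set (p @ [y]) \<inter> F = {}" using sp y unfolding V2_def by auto
      ultimately show "Xy_path_excl V E S y F p'" using y pe unfolding Xy_path_excl_def by simp
    qed
    moreover have "\<forall>p\<in>P'. \<forall>q\<in>P'. p \<noteq> q \<longrightarrow> set p \<inter> set q = {y}"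
    proof (intro ballI impI)
      fix p' q' assume "p' \<in> P'" "q' \<in> P'" "p' \<noteq> q'"
      then obtain p q where "p \<in> P" "q \<in> P" "p' = p @ [y]" "q' = q @ [y]" "p \<noteq> q"
        unfolding P'_def by blast
      thus "set p' \<inter> set q' = {y}" using P(4) unfolding disj_def by auto
    qed
    ultimately show "\<exists>P. finite P \<and> f + 1 \<le> card P \<and> (\<forall>p\<in>P. Xy_path_excl V E S y F p) \<and>
        (\<forall>p\<in>P. \<forall>q\<in>P. p \<noteq> q \<longrightarrow> set p \<inter> set q = {y})" by (intro exI[of _ P']) simp
  qed
qed


end
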